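(* Let $1\le j<n$ with $\gcd(n,j)=1$ and $k=n-j$. Let $\phi$ be the Drinfeld module over $L$ with $\phi_T=-\tau^n+g\tau^j+1$ ($g\in L$), and let $\lambda=\tau^k-a$ with $a\in L^\times$. Then there exists a Drinfeld $A$-module $\psi$ of characteristic $T-1$ over $L$ such that $\lambda$ is an isogeny from $\phi$ to $\psi$ if and only if $$\frac{1}{a}\,g^{q^k}-\frac{1}{a^{q^j}}\,g-a^{q^n-1}+1=0 .$$ In that case $\psi_T=-\tau^n+h\tau^j+1$ with $h=-a^{q^n}+a+g^{q^k}$.
   Context: $q$ is a prime power, $A=\mathbb{F}_q[T]$, $L$ is a field containing $\mathbb{F}_q$ with an $\mathbb{F}_q$-algebra homomorphism $\iota:A\to L$ whose kernel is $(T-1)$ (so $\iota(T)=1$). $L\{\tau\}$ is the twisted polynomial ring of additive polynomials over $L$, with $\tau$ the $q$-Frobenius, so $\tau c=c^q\tau$ for $c\in L$; for $f=a_0+a_1\tau+\dots$ set $D(f)=a_0$. A Drinfeld $A$-module of characteristic $T-1$ over $L$ is an $\mathbb{F}_q$-algebra homomorphism $\phi:A\to L\{\tau\}$, $a\mapsto\phi_a$, with $D\circ\phi=\iota$ and $\phi_a\ne\iota(a)$ for some $a$; it is determined by $\phi_T$. An isogeny $\lambda:\phi\to\psi$ over $L$ is $\lambda\in L\{\tau\}$ with $\lambda\phi_a=\psi_a\lambda$ for all $a\in A$ (equivalently for $a=T$). *)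

theory Defs
  imports "HOL-Computational_Algebra.Primes"
begin

text \<open>The field L is a type 'a of class field containing F_q: q = p^m with p = char L,
  and x^q - x has exactly q roots in L.  Elements of the twisted polynomial ring L{tau}
  are coefficient sequences f :: nat => 'a with finite support (f i = coefficient of tau^i).\<close>

definition contains_Fq :: "nat \<Rightarrow> 'a::field itself \<Rightarrow> bool" where
  "contains_Fq q TYPE('a) \<longleftrightarrow>
     (\<exists>p m. prime p \<and> m \<ge> 1 \<and> q = p ^ m \<and> CHAR('a) = p) \<and>
     card {x::'a. x ^ q = x} = q"

definition is_tpoly :: "(nat \<Rightarrow> 'a::field) \<Rightarrow> bool" where
  "is_tpoly f \<longleftrightarrow> finite {i. f i \<noteq> 0}"

text \<open>Multiplication in L{tau}: tau c = c^q tau, so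
  (sum f_i tau^i)(sum g_j tau^j) = sum_n (sum_{i<=n} f_i g_{n-i}^(q^i)) tau^n.\<close>
definition tmul :: "nat \<Rightarrow> (nat \<Rightarrow> 'a::field) \<Rightarrow> (nat \<Rightarrow> 'a) \<Rightarrow> (nat \<Rightarrow> 'a)" where
  "tmul q f g = (\<lambda>n. \<Sum>i\<le>n. f i * (g (n - i)) ^ (q ^ i))"

definition tmon :: "'a::field \<Rightarrow> nat \<Rightarrow> (nat \<Rightarrow> 'a)" where
  "tmon c i = (\<lambda>m. if m = i then c else 0)"

text \<open>A Drinfeld A-module of characteristic T-1 over L, A = F_q[T], is determined by
  its value psi_T, which can be any element of L{tau} with constant term iota(T) = 1
  that is not a constant (the condition psi_a \<noteq> iota(a) for some a is equivalent to
  psi_T \<noteq> iota(T)).  We represent the module by psi_T.\<close>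
definition drinfeld_T :: "(nat \<Rightarrow> 'a::field) \<Rightarrow> bool" where
  "drinfeld_T psiT \<longleftrightarrow> is_tpoly psiT \<and> psiT 0 = 1 \<and> psiT \<noteq> tmon 1 0"

definition is_isogeny :: "nat \<Rightarrow> (nat \<Rightarrow> 'a::field) \<Rightarrow> (nat \<Rightarrow> 'a) \<Rightarrow> (nat \<Rightarrow> 'a) \<Rightarrow> bool" where
  "is_isogeny q lam phiT psiT \<longleftrightarrow> is_tpoly lam \<and> tmul q lam phiT = tmul q psiT lam"

end

theory Submission imports Defs begin

lemma Fq_facts:
  assumes "contains_Fq q TYPE('a::field)"
  shows "q > 0" "\<And>i. (-1::'a) ^ (q ^ i) = -1"
proof -
  obtain p m where pm: "prime p" "m \<ge> 1" "q = p ^ m" "CHAR('a) = p"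
    using assms unfolding contains_Fq_def by blast
  have p2: "p \<ge> 2" using pm(1) prime_ge_2_nat by blast
  show "q > 0" using pm p2 by simp
  fix i
  show "(-1::'a) ^ (q ^ i) = -1"
  proof (cases "p = 2")
    case True
    have "(of_nat 2 :: 'a) = 0" using pm(4) True of_nat_CHAR[where 'a='a] by simp
    hence "(1::'a) + 1 = 0" by simp
    hence m1: "(-1::'a) = 1" by (metis add_eq_0_iff)
    show ?thesis unfolding m1 by simp
  next
    case False
    hence "odd p" using prime_odd_nat[OF pm(1)] p2 by simp
    hence "odd (q ^ i)" using pm(3) by simp
    thus ?thesis by simp
  qed
qed

lemma tmul_lam_right:
  fixes f :: "nat \<Rightarrow> 'a::field"
  assumes "q > 0" "\<And>i. (-1::'a) ^ (q ^ i) = -1" "k \<ge> 1"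
  shows "tmul q f (\<lambda>m. tmon 1 k m + tmon (-a) 0 m) m
       = (if k \<le> m then f (m - k) else 0) - f m * a ^ (q ^ m)"
proof -
  have pw: "\<And>i. ((-a) ^ (q ^ i)::'a) = - (a ^ (q ^ i))"
    by (metis assms(2) mult_minus1 power_mult_distrib mult.commute)
  have "tmul q f (\<lambda>m. tmon 1 k m + tmon (-a) 0 m) m
     = (\<Sum>i\<le>m. (if i = m - k \<and> k \<le> m then f i else 0) + (if i = m then - (f m * a ^ (q ^ m)) else 0))"
    unfolding tmul_def
  proof (rule sum.cong[OF refl])
    fix i assume "i \<in> {..m}"
    then show "f i * (tmon 1 k (m - i) + tmon (- a) 0 (m - i)) ^ q ^ i =
         (if i = m - k \<and> k \<le> m then f i else 0) + (if i = m then - (f m * a ^ q ^ m) else 0)"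
      using assms(1,3) pw by (auto simp: tmon_def)
  qed
  also have "\<dots> = (if k \<le> m then f (m - k) else 0) - f m * a ^ (q ^ m)"
    by (simp add: sum.distrib)
  finally show ?thesis .
qed

lemma tmul_lam_left:
  fixes f :: "nat \<Rightarrow> 'a::field"
  assumes "k \<ge> 1"
  shows "tmul q (\<lambda>m. tmon 1 k m + tmon (-a) 0 m) f m
       = -a * f m + (if k \<le> m then f (m - k) ^ (q ^ k) else 0)"
proof -
  have "tmul q (\<lambda>m. tmon 1 k m + tmon (-a) 0 m) f m
     = (\<Sum>i\<le>m. (if i = 0 then -a * f m else 0) + (if i = k then f (m - k) ^ (q ^ k) else 0))"
    unfolding tmul_def
    by (rule sum.cong[OF refl]) (use assms in \<open>auto simp: tmon_def\<close>)
  also have "\<dots> = -a * f m + (if k \<le> m then f (m - k) ^ (q ^ k) else 0)"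
    by (simp add: sum.distrib)
  finally show ?thesis .
qed

lemma uniq_d:
  fixes d :: "nat \<Rightarrow> 'a::field"
  assumes fin: "finite {i. d i \<noteq> 0}" and d0: "d 0 = 0" and k1: "k \<ge> 1" and a: "a \<noteq> 0"
    and eq: "\<And>m. (if k \<le> m then d (m - k) else 0) - d m * a ^ (q ^ m) = (if m = j then E else 0)"
  shows "d = (\<lambda>_. 0) \<and> E = 0"
proof -
  have dz: "d = (\<lambda>_. 0)"
  proof (rule ccontr)
    assume "d \<noteq> (\<lambda>_. 0)"
    then obtain i where "d i \<noteq> 0" by auto
    define S where "S = {i. d i \<noteq> 0}"
    have Sne: "S \<noteq> {}" using \<open>d i \<noteq> 0\<close> S_def by auto
    have Sf: "finite S" using fin S_def by simp
    define M where "M = Max S"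
    define m0 where "m0 = Min S"
    have M: "d M \<noteq> 0" using Max_in[OF Sf Sne] M_def S_def by auto
    have m0: "d m0 \<noteq> 0" using Min_in[OF Sf Sne] m0_def S_def by auto
    have m0M: "m0 \<le> M" using M_def m0_def Sf Sne Min_le[OF Sf] Max_in[OF Sf Sne] by blast
    have "d (M + k) = 0"
    proof (rule ccontr)
      assume "d (M + k) \<noteq> 0"
      hence "M + k \<le> M" using Max_ge[OF Sf, of "M + k"] M_def S_def by simp
      thus False using k1 by simp
    qed
    hence "d M = (if M + k = j then E else 0)" using eq[of "M + k"] by simp
    hence Mk: "M + k = j" using M by (auto split: if_splits)
    have "m0 \<noteq> 0" using m0 d0 by (metis)
    have "(if k \<le> m0 then d (m0 - k) else 0) = 0"
    proof (cases "k \<le> m0")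
      case True
      have "d (m0 - k) = 0"
      proof (rule ccontr)
        assume "d (m0 - k) \<noteq> 0"
        hence "m0 \<le> m0 - k" using Min_le[OF Sf] m0_def S_def by auto
        thus False using k1 \<open>m0 \<noteq> 0\<close> True by simp
      qed
      thus ?thesis by simp
    qed simp
    hence "- d m0 * a ^ (q ^ m0) = (if m0 = j then E else 0)" using eq[of m0] by simp
    moreover have "- d m0 * a ^ (q ^ m0) \<noteq> 0" using m0 a by simp
    ultimately have "m0 = j" by (auto split: if_splits)
    thus False using Mk m0M k1 by simp
  qed
  moreover have "E = 0" using eq[of j] dz by (simp split: if_splits)
  ultimately show ?thesis by simp
qed

theorem proposition4p1:
  fixes q n j k :: nat and g a :: "'a::field"
  assumes "contains_Fq q TYPE('a)"
    and "1 \<le> j" and "j < n" and "gcd n j = 1" and "k = n - j"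
    and "a \<noteq> 0"
  defines "phiT \<equiv> (\<lambda>m. tmon (-1) n m + tmon g j m + tmon 1 0 m)"
    and "lam \<equiv> (\<lambda>m. tmon 1 k m + tmon (-a) 0 m)"
  shows "((\<exists>psiT. drinfeld_T psiT \<and> is_isogeny q lam phiT psiT) \<longleftrightarrow>
           (1 / a) * g ^ (q ^ k) - (1 / a ^ (q ^ j)) * g - a ^ (q ^ n - 1) + 1 = 0)
       \<and> (\<forall>psiT. drinfeld_T psiT \<and> is_isogeny q lam phiT psiT \<longrightarrow>
           psiT = (\<lambda>m. tmon (-1) n m
                      + tmon (- (a ^ (q ^ n)) + a + g ^ (q ^ k)) j m + tmon 1 0 m))"
proof -
  note F = Fq_facts[OF assms(1)]
  have k1: "k \<ge> 1" using assms by simp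
  define h where "h = - (a ^ (q ^ n)) + a + g ^ (q ^ k)"
  define psi0 where "psi0 = (\<lambda>m. tmon (-1) n m + tmon h j m + tmon (1::'a) 0 m)"
  define E where "E = h * a ^ (q ^ j) - a * g"
  have phiv: "\<And>x. phiT x = (if x = n then -1 else if x = j then g else if x = 0 then 1 else 0)"
    using assms(2,3) by (auto simp: phiT_def tmon_def)
  have phipow: "\<And>x. phiT x ^ (q ^ k) = (if x = n then -1 else if x = j then g ^ (q ^ k) else if x = 0 then 1 else 0)"
    using F by (auto simp: phiv)
  have psiv: "\<And>x. psi0 x = (if x = n then -1 else if x = j then h else if x = 0 then 1 else 0)"
    using assms(2,3) by (auto simp: psi0_def tmon_def)
  have L: "\<And>m. tmul q lam phiT m = -a * phiT m + (if k \<le> m then phiT (m - k) ^ (q ^ k) else 0)"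
    unfolding lam_def by (rule tmul_lam_left[OF k1])
  have R: "\<And>f m. tmul q f lam m = (if k \<le> m then f (m - k) else 0) - f m * a ^ (q ^ m)"
    unfolding lam_def by (rule tmul_lam_right[OF F k1])
  have key: "\<And>m. tmul q lam phiT m - tmul q psi0 lam m = (if m = j then E else 0)"
  proof -
    fix m
    have jn: "1 \<le> k" "n = j + k" "1 \<le> j" using assms(2,3,5) by auto
    consider "m = j" | "m = n" | "m = n + k" | "m = k" "m \<noteq> j" | "m = 0"
      | "m \<noteq> j" "m \<noteq> n" "m \<noteq> n + k" "m \<noteq> k" "m \<noteq> 0" by blast
    then show "tmul q lam phiT m - tmul q psi0 lam m = (if m = j then E else 0)"
    proof cases
      case 1
      show ?thesis
      proof (cases "j = k")
        case True
        then show ?thesis unfolding L R phipow psiv using jn 1 by (simp add: phiv E_def algebra_simps)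
      next
        case False
        have "j - k \<noteq> j" "j - k \<noteq> n" "j \<noteq> n" "j \<noteq> 0" "j - k \<noteq> 0 \<or> \<not> k \<le> j" using jn False by auto
        then show ?thesis unfolding L R phipow psiv using 1 by (simp add: phiv E_def algebra_simps)
      qed
    next
      case 2
      then show ?thesis unfolding L R phipow psiv using jn by (simp add: phiv h_def algebra_simps)
    next
      case 3
      then show ?thesis unfolding L R phipow psiv using jn by (simp add: phiv)
    next
      case 4
      then show ?thesis unfolding L R phipow psiv using jn by (simp add: phiv)
    next
      case 5
      then show ?thesis unfolding L R phipow psiv using jn by (simp add: phiv)
    next
      case 6
      then show ?thesis unfolding L R phipow psiv using jn by (auto simp: phiv)
    qed
  qed
  have condE: "((1 / a) * g ^ (q ^ k) - (1 / a ^ (q ^ j)) * g - a ^ (q ^ n - 1) + 1 = 0) \<longleftrightarrow> E = 0"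
  proof -
    have qn: "a ^ (q ^ n - 1) = a ^ (q ^ n) / a"
      using F(1) assms(6) by (simp add: power_diff)
    have "(1 / a) * g ^ (q ^ k) - (1 / a ^ (q ^ j)) * g - a ^ (q ^ n - 1) + 1 = E / (a * a ^ (q ^ j))"
      unfolding qn E_def h_def using assms(6) by (simp add: field_simps)
    thus ?thesis using assms(6) by simp
  qed
  have main: "\<And>psiT. drinfeld_T psiT \<Longrightarrow> is_isogeny q lam phiT psiT \<Longrightarrow> psiT = psi0 \<and> E = 0"
  proof -
    fix psiT assume D: "drinfeld_T psiT" and I: "is_isogeny q lam phiT psiT"
    define d where "d = (\<lambda>m. psiT m - psi0 m)"
    have fin: "finite {i. d i \<noteq> 0}"
    proof (rule finite_subset[of _ "{i. psiT i \<noteq> 0} \<union> {n, j, 0}"])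
      show "{i. d i \<noteq> 0} \<subseteq> {i. psiT i \<noteq> 0} \<union> {n, j, 0}" by (auto simp: d_def psiv)
      show "finite ({i. psiT i \<noteq> 0} \<union> {n, j, 0})" using D by (simp add: drinfeld_T_def is_tpoly_def)
    qed
    have d0: "d 0 = 0" using D assms(2,3) by (simp add: d_def psiv drinfeld_T_def)
    have eq: "\<And>m. (if k \<le> m then d (m - k) else 0) - d m * a ^ (q ^ m) = (if m = j then E else 0)"
    proof -
      fix m
      have "tmul q lam phiT m = tmul q psiT lam m" using I by (simp add: is_isogeny_def)
      hence "tmul q psiT lam m - tmul q psi0 lam m = (if m = j then E else 0)" using key[of m] by simp
      thus "(if k \<le> m then d (m - k) else 0) - d m * a ^ (q ^ m) = (if m = j then E else 0)"
        unfolding R d_def by (auto simp: algebra_simps split: if_splits)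
    qed
    from uniq_d[OF fin d0 k1 assms(6) eq] have "d = (\<lambda>_. 0)" "E = 0" by auto
    thus "psiT = psi0 \<and> E = 0" by (auto simp: d_def fun_eq_iff)
  qed
  have bck: "E = 0 \<Longrightarrow> drinfeld_T psi0 \<and> is_isogeny q lam phiT psi0"
  proof -
    assume E0: "E = 0"
    have "is_tpoly psi0"
      unfolding is_tpoly_def by (rule finite_subset[of _ "{n, j, 0}"]) (auto simp: psiv)
    moreover have "psi0 0 = 1" using assms(2,3) by (simp add: psiv)
    moreover have "psi0 \<noteq> tmon 1 0"
    proof
      assume "psi0 = tmon 1 0"
      hence "psi0 n = tmon 1 0 n" by simp
      thus False using assms(2,3) by (simp add: psiv tmon_def)
    qed
    moreover have "is_tpoly lam"
      unfolding is_tpoly_def by (rule finite_subset[of _ "{k, 0}"]) (auto simp: lam_def tmon_def)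
    moreover have "tmul q lam phiT = tmul q psi0 lam"
    proof
      fix m show "tmul q lam phiT m = tmul q psi0 lam m" using key[of m] E0 by (simp split: if_splits)
    qed
    ultimately show ?thesis by (simp add: drinfeld_T_def is_isogeny_def)
  qed
  show ?thesis
    unfolding condE
    using main bck unfolding psi0_def h_def by blast
qed

end
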